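(* If a minimal tree $T$ of order $n\ge6$ has a branch with $5$ vertices, then this branch is contained in a branch of $T$ whose order is $10$, $11$, $15$ or $16$.
   Context: A rooted tree $T$ is a finite tree with a distinguished vertex, its root; its order $|T|$ is its number of vertices. For vertices $u,v$, the infimum of $u$ and $v$ is the vertex common to the path from $u$ to the root and the path from $v$ to the root that is furthest from the root. A set $X\subseteq V(T)$ is infima closed if the infimum of any two elements of $X$ lies in $X$. $I(T)$ denotes the number of nonempty infima closed subsets of $V(T)$. For $n\ge1$, $m_n=\min\{I(T): |T|=n\}$; a rooted tree $T$ with $I(T)=m_{|T|}$ is called minimal. A branch of $T$ is the subtree consisting of a vertex and all its descendants, rooted at that vertex. *)

theory Defs
  imports Main "HOL-Library.Sublist"
begin

text \<open>Rooted trees: a node with a (finite) list of children. The order of the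
children is irrelevant for all notions used below.\<close>
datatype rtree = Node "rtree list"

fun tsize :: "rtree \<Rightarrow> nat" where
  "tsize (Node ts) = Suc (sum_list (map tsize ts))"

text \<open>Vertices are addressed by positions (paths from the root); the root is [].
 u is an ancestor-or-equal of v iff u is a prefix of v.\<close>
fun is_pos :: "rtree \<Rightarrow> nat list \<Rightarrow> bool" where
  "is_pos t [] = True"
| "is_pos (Node ts) (i # p) = (i < length ts \<and> is_pos (ts ! i) p)"

definition positions :: "rtree \<Rightarrow> nat list set" where
  "positions T = {p. is_pos T p}"

fun branch_at :: "rtree \<Rightarrow> nat list \<Rightarrow> rtree" where
  "branch_at t [] = t"
| "branch_at (Node ts) (i # p) = branch_at (ts ! i) p"

definition vinf :: "nat list \<Rightarrow> nat list \<Rightarrow> nat list" where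
  "vinf u v = longest_common_prefix u v"

definition infima_closed :: "nat list set \<Rightarrow> bool" where
  "infima_closed X \<longleftrightarrow> (\<forall>u\<in>X. \<forall>v\<in>X. vinf u v \<in> X)"

definition I :: "rtree \<Rightarrow> nat" where
  "I T = card {X. X \<subseteq> positions T \<and> X \<noteq> {} \<and> infima_closed X}"

definition m :: "nat \<Rightarrow> nat" where
  "m n = Min {I T | T. tsize T = n}"

definition minimal :: "rtree \<Rightarrow> bool" where
  "minimal T \<longleftrightarrow> I T = m (tsize T)"

end

theory Submission
  imports Defs "HOL-Library.FuncSet" "HOL-Library.Multiset"
begin

definition F :: "rtree \<Rightarrow> nat list set set" where
  "F t = {X. X \<subseteq> positions t \<and> X \<noteq> {} \<and> infima_closed X}"

lemma I_F: "I t = card (F t)"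
  by (simp add: I_def F_def)

lemma vinf_simps[simp]:
  "vinf [] v = []" "vinf u [] = []"
  "vinf (i#u) (j#v) = (if i = j then i # vinf u v else [])"
  unfolding vinf_def by (simp, cases u, simp_all)

lemma positions_Node:
  "positions (Node ts) = insert [] (\<Union>i<length ts. Cons i ` positions (ts!i))"
  unfolding positions_def
proof (intro set_eqI iffI)
  fix p assume "p \<in> {p. is_pos (Node ts) p}"
  then show "p \<in> insert [] (\<Union>i<length ts. Cons i ` {p. is_pos (ts ! i) p})"
    by (cases p) auto
qed auto

lemma finite_positions: "finite (positions t)"
proof (induction t)
  case (Node ts)
  then show ?case by (auto simp: positions_Node)
qed

lemma finite_F: "finite (F t)"
proof -
  have "F t \<subseteq> Pow (positions t)" by (auto simp: F_def)
  then show ?thesis using finite_positions by (meson finite_Pow_iff finite_subset)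
qed

lemma empty_notin_F: "{} \<notin> F t" by (simp add: F_def)

lemma F1:
  "{X \<in> F (Node ts). [] \<notin> X} = (\<Union>i<length ts. image (Cons i) ` F (ts!i))"
proof (intro set_eqI iffI)
  fix X assume X: "X \<in> {X \<in> F (Node ts). [] \<notin> X}"
  then have sub: "X \<subseteq> positions (Node ts)" and ne: "X \<noteq> {}" and cl: "infima_closed X"
    and nr: "[] \<notin> X" by (auto simp: F_def)
  obtain x where x: "x \<in> X" using ne by blast
  then obtain i p where xi: "x = i # p" using nr by (cases x) auto
  have all: "\<forall>y\<in>X. \<exists>q. y = i # q"
  proof
    fix y assume y: "y \<in> X"
    then obtain j q where yj: "y = j # q" using nr by (cases y) auto
    have "vinf x y \<in> X" using cl x y by (auto simp: infima_closed_def)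
    then have "i = j" using nr xi yj by (auto split: if_splits)
    then show "\<exists>q. y = i # q" using yj by blast
  qed
  define Y where "Y = {q. i # q \<in> X}"
  have XY: "X = Cons i ` Y" using all by (auto simp: Y_def)
  have il: "i < length ts" using sub x xi by (auto simp: positions_def)
  have "Y \<in> F (ts!i)"
    unfolding F_def
  proof (intro CollectI conjI)
    show "Y \<subseteq> positions (ts ! i)" using sub by (auto simp: Y_def positions_def)
    show "Y \<noteq> {}" using x xi by (auto simp: Y_def)
    show "infima_closed Y" unfolding infima_closed_def Y_def
    proof (clarify)
      fix u v assume "i#u \<in> X" "i#v \<in> X"
      then have "vinf (i#u) (i#v) \<in> X" using cl unfolding infima_closed_def by blast
      then show "i # vinf u v \<in> X" by simp
    qed
  qed
  then show "X \<in> (\<Union>i<length ts. image (Cons i) ` F (ts!i))" using XY il by blast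
next
  fix X assume "X \<in> (\<Union>i<length ts. image (Cons i) ` F (ts!i))"
  then obtain i Y where il: "i < length ts" and Y: "Y \<in> F (ts!i)" and XY: "X = Cons i ` Y" by blast
  have "Cons i ` Y \<subseteq> positions (Node ts)" using Y il by (auto simp: F_def positions_def)
  moreover have "Cons i ` Y \<noteq> {}" using Y by (auto simp: F_def)
  moreover have "infima_closed (Cons i ` Y)" using Y
    unfolding F_def infima_closed_def by auto
  ultimately show "X \<in> {X \<in> F (Node ts). [] \<notin> X}" unfolding XY F_def by auto
qed

lemma card_F1:
  "card {X \<in> F (Node ts). [] \<notin> X} = (\<Sum>i<length ts. card (F (ts!i)))"
proof -
  have "card (\<Union>i<length ts. image (Cons i) ` F (ts!i)) = (\<Sum>i<length ts. card (image (Cons i) ` F (ts!i)))"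
  proof (rule card_UN_disjoint)
    show "finite {..<length ts}" by simp
    show "\<forall>i\<in>{..<length ts}. finite (image (Cons i) ` F (ts ! i))" using finite_F by blast
    show "\<forall>i\<in>{..<length ts}. \<forall>j\<in>{..<length ts}. i \<noteq> j \<longrightarrow>
       image (Cons i) ` F (ts ! i) \<inter> image (Cons j) ` F (ts ! j) = {}"
    proof (intro ballI impI)
      fix i j :: nat assume "i \<in> {..<length ts}" "j \<in> {..<length ts}" "i \<noteq> j"
      show "image (Cons i) ` F (ts ! i) \<inter> image (Cons j) ` F (ts ! j) = {}"
      proof (rule ccontr)
        assume "image (Cons i) ` F (ts ! i) \<inter> image (Cons j) ` F (ts ! j) \<noteq> {}"
        then obtain A B where A: "A \<in> F (ts!i)" and B: "B \<in> F (ts!j)" and eq: "Cons i ` A = Cons j ` B" by auto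
        obtain a where "a \<in> A" using A by (auto simp: F_def)
        then have "i # a \<in> Cons j ` B" using eq by auto
        then show False using \<open>i \<noteq> j\<close> by auto
      qed
    qed
  qed
  moreover have "card (image (Cons i) ` F (ts!i)) = card (F (ts!i))" for i
    by (rule card_image) (simp add: inj_on_def inj_image_eq_iff)
  ultimately show ?thesis by (simp add: F1)
qed

lemma F2_bij:
  "bij_betw (\<lambda>X. restrict (\<lambda>i. {p. i#p \<in> X}) {..<length ts})
     {X \<in> F (Node ts). [] \<in> X} (PiE {..<length ts} (\<lambda>i. insert {} (F (ts!i))))"
proof (rule bij_betw_byWitness[where f' = "\<lambda>Y. insert [] (\<Union>i<length ts. Cons i ` Y i)"])
  show "\<forall>X\<in>{X \<in> F (Node ts). [] \<in> X}.
      insert [] (\<Union>i<length ts. Cons i ` restrict (\<lambda>i. {p. i # p \<in> X}) {..<length ts} i) = X"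
  proof
    fix X assume X: "X \<in> {X \<in> F (Node ts). [] \<in> X}"
    then have sub: "X \<subseteq> positions (Node ts)" and r: "[] \<in> X" by (auto simp: F_def)
    show "insert [] (\<Union>i<length ts. Cons i ` restrict (\<lambda>i. {p. i # p \<in> X}) {..<length ts} i) = X"
    proof (intro set_eqI iffI)
      fix x assume "x \<in> X"
      then show "x \<in> insert [] (\<Union>i<length ts. Cons i ` restrict (\<lambda>i. {p. i # p \<in> X}) {..<length ts} i)"
      proof (cases x)
        case (Cons a l)
        have a: "a < length ts" using sub \<open>x \<in> X\<close> Cons by (auto simp: positions_def)
        have "x \<in> Cons a ` {p. a#p \<in> X}" using Cons \<open>x \<in> X\<close> by auto
        then show ?thesis using a by auto
      qed simp
    qed (use r in auto)
  qed
  show "\<forall>Y\<in>PiE {..<length ts} (\<lambda>i. insert {} (F (ts!i))).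
     restrict (\<lambda>i. {p. i # p \<in> insert [] (\<Union>i<length ts. Cons i ` Y i)}) {..<length ts} = Y"
  proof
    fix Y assume Y: "Y \<in> PiE {..<length ts} (\<lambda>i. insert {} (F (ts!i)))"
    show "restrict (\<lambda>i. {p. i # p \<in> insert [] (\<Union>i<length ts. Cons i ` Y i)}) {..<length ts} = Y"
    proof (rule ext)
      fix i show "restrict (\<lambda>i. {p. i # p \<in> insert [] (\<Union>i<length ts. Cons i ` Y i)}) {..<length ts} i = Y i"
        using Y by (cases "i < length ts") (auto simp: PiE_def extensional_def)
    qed
  qed
  show "(\<lambda>X. restrict (\<lambda>i. {p. i#p \<in> X}) {..<length ts}) ` {X \<in> F (Node ts). [] \<in> X}
     \<subseteq> PiE {..<length ts} (\<lambda>i. insert {} (F (ts!i)))"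
  proof (rule image_subsetI)
    fix X assume X: "X \<in> {X \<in> F (Node ts). [] \<in> X}"
    then have sub: "X \<subseteq> positions (Node ts)" and cl: "infima_closed X" by (auto simp: F_def)
    have "{p. i # p \<in> X} \<in> insert {} (F (ts!i))" if i: "i < length ts" for i
    proof (cases "{p. i # p \<in> X} = {}")
      case False
      have "infima_closed {p. i # p \<in> X}" unfolding infima_closed_def
      proof (clarify)
        fix u v assume "i#u \<in> X" "i#v \<in> X"
        then have "vinf (i#u) (i#v) \<in> X" using cl unfolding infima_closed_def by blast
        then show "i # vinf u v \<in> X" by simp
      qed
      moreover have "{p. i # p \<in> X} \<subseteq> positions (ts!i)" using sub by (auto simp: positions_def)
      ultimately show ?thesis using False by (simp add: F_def)
    qed simp
    then show "restrict (\<lambda>i. {p. i#p \<in> X}) {..<length ts} \<in> PiE {..<length ts} (\<lambda>i. insert {} (F (ts!i)))"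
      by auto
  qed
  show "(\<lambda>Y. insert [] (\<Union>i<length ts. Cons i ` Y i)) ` PiE {..<length ts} (\<lambda>i. insert {} (F (ts!i)))
     \<subseteq> {X \<in> F (Node ts). [] \<in> X}"
  proof (rule image_subsetI)
    fix Y assume Y: "Y \<in> PiE {..<length ts} (\<lambda>i. insert {} (F (ts!i)))"
    then have Yi: "i < length ts \<Longrightarrow> Y i = {} \<or> Y i \<in> F (ts!i)" for i by auto
    let ?X = "insert [] (\<Union>i<length ts. Cons i ` Y i)"
    have "?X \<subseteq> positions (Node ts)"
    proof
      fix x assume "x \<in> ?X"
      then show "x \<in> positions (Node ts)"
      proof
        assume "x \<in> (\<Union>i<length ts. Cons i ` Y i)"
        then obtain i p where i: "i < length ts" and p: "p \<in> Y i" and x: "x = i # p" by auto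
        have "Y i \<in> F (ts!i)" using Yi[OF i] p by auto
        then show ?thesis using i p x by (auto simp: F_def positions_def)
      qed (simp add: positions_def)
    qed
    moreover have "infima_closed ?X" unfolding infima_closed_def
    proof (intro ballI)
      fix u v assume u: "u \<in> ?X" and v: "v \<in> ?X"
      show "vinf u v \<in> ?X"
      proof (cases "u = [] \<or> v = []")
        case True then show ?thesis by auto
      next
        case False
        then obtain i p j q where "u = i # p" "v = j # q" "i < length ts" "j < length ts"
          "p \<in> Y i" "q \<in> Y j" using u v by auto
        moreover have "vinf p q \<in> Y i" if "i = j" "p \<in> Y i" "q \<in> Y i" "i < length ts"
        proof -
          have "Y i \<in> F (ts!i)" using Yi that by auto
          then show ?thesis using that by (auto simp: F_def infima_closed_def)
        qed
        ultimately show ?thesis by auto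
      qed
    qed
    ultimately show "?X \<in> {X \<in> F (Node ts). [] \<in> X}" by (simp add: F_def)
  qed
qed

lemma card_F2:
  "card {X \<in> F (Node ts). [] \<in> X} = (\<Prod>i<length ts. Suc (card (F (ts!i))))"
proof -
  have "card {X \<in> F (Node ts). [] \<in> X} = card (PiE {..<length ts} (\<lambda>i. insert {} (F (ts!i))))"
    using F2_bij by (rule bij_betw_same_card)
  also have "\<dots> = (\<Prod>i<length ts. card (insert {} (F (ts!i))))" by (simp add: card_PiE)
  also have "\<dots> = (\<Prod>i<length ts. Suc (card (F (ts!i))))"
    using finite_F empty_notin_F by simp
  finally show ?thesis .
qed

lemma sum_list_nth: "sum_list (map f xs) = (\<Sum>i<length xs. f (xs!i))"
  using sum_list_sum_nth[of "map f xs"] by (simp add: atLeast0LessThan)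

lemma prod_list_nth: "prod_list (map f xs) = (\<Prod>i<length xs. f (xs!i))"
  by (induction xs) (simp_all add: prod.lessThan_Suc_shift del: prod.lessThan_Suc)

lemma I_Node: "I (Node ts) = sum_list (map I ts) + prod_list (map (\<lambda>t. Suc (I t)) ts)"
proof -
  have "F (Node ts) = {X \<in> F (Node ts). [] \<notin> X} \<union> {X \<in> F (Node ts). [] \<in> X}" by auto
  then have "card (F (Node ts)) = card {X \<in> F (Node ts). [] \<notin> X} + card {X \<in> F (Node ts). [] \<in> X}"
    using finite_F by (metis (no_types, lifting) card_Un_disjoint disjoint_iff finite_Un mem_Collect_eq)
  then show ?thesis by (simp add: I_F card_F1 card_F2 sum_list_nth prod_list_nth)
qed



abbreviation leaf :: rtree where "leaf \<equiv> Node []"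

definition lmin :: "rtree \<Rightarrow> bool" where
  "lmin T \<longleftrightarrow> (\<forall>T'. tsize T' = tsize T \<longrightarrow> I T \<le> I T')"

definition SS :: "rtree multiset \<Rightarrow> nat" where "SS M = sum_mset (image_mset I M)"
definition PP :: "rtree multiset \<Rightarrow> nat" where "PP M = prod_mset (image_mset (\<lambda>t. Suc (I t)) M)"
definition ZZ :: "rtree multiset \<Rightarrow> nat" where "ZZ M = sum_mset (image_mset tsize M)"

lemma SS_simps[simp]: "SS {#} = 0" "SS (add_mset t M) = I t + SS M" "SS (A + B) = SS A + SS B"
  by (simp_all add: SS_def)
lemma PP_simps[simp]: "PP {#} = 1" "PP (add_mset t M) = Suc (I t) * PP M" "PP (A + B) = PP A * PP B"
  by (simp_all add: PP_def)
lemma ZZ_simps[simp]: "ZZ {#} = 0" "ZZ (add_mset t M) = tsize t + ZZ M" "ZZ (A + B) = ZZ A + ZZ B"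
  by (simp_all add: ZZ_def)

lemma ZZ_list[simp]: "sum_list (map tsize ts) = ZZ (mset ts)"
  by (induction ts) auto

lemma PP_pos: "PP M \<ge> 1"
  by (induction M) auto

lemma I_Node_mset: "I (Node ts) = SS (mset ts) + PP (mset ts)"
proof -
  have "sum_list (map I ts) = SS (mset ts)"
    by (induction ts) auto
  moreover have "prod_list (map (\<lambda>t. Suc (I t)) ts) = PP (mset ts)"
    by (induction ts) auto
  ultimately show ?thesis by (simp add: I_Node)
qed

lemma tsize_Node_mset: "tsize (Node ts) = Suc (ZZ (mset ts))"
  by (induction ts) auto

lemma tsize_pos: "tsize t \<ge> 1"
  by (cases t) auto

lemma I_pos: "I t \<ge> 1"
proof (cases t)
  case (Node ts) then show ?thesis using PP_pos[of "mset ts"] by (simp add: I_Node_mset)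
qed

lemma I_leaf[simp]: "I leaf = 1" by (simp add: I_Node_mset)

lemma SS_le_PP: "Suc (SS M) \<le> PP M"
proof (induction M)
  case empty then show ?case by simp
next
  case (add t M)
  have "Suc (I t + SS M) \<le> Suc (I t) * Suc (SS M)" by simp
  also have "\<dots> \<le> Suc (I t) * PP M" by (rule mult_le_mono2[OF add])
  finally show ?case by simp
qed

lemma PP_le_pow: "(\<And>t. t \<in># M \<Longrightarrow> Suc (I t) \<le> 2 ^ tsize t) \<Longrightarrow> PP M \<le> 2 ^ ZZ M"
proof (induction M)
  case empty then show ?case by simp
next
  case (add t M)
  have "PP (add_mset t M) = Suc (I t) * PP M" by simp
  also have "\<dots> \<le> 2 ^ tsize t * 2 ^ ZZ M"
    using add by (intro mult_le_mono) auto
  finally show ?case by (simp add: power_add)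
qed

lemma I_bound: "Suc (I t) \<le> 2 ^ tsize t"
proof (induction t)
  case (Node ts)
  have P: "PP (mset ts) \<le> 2 ^ ZZ (mset ts)" using Node by (intro PP_le_pow) auto
  have "Suc (I (Node ts)) = Suc (SS (mset ts)) + PP (mset ts)" by (simp add: I_Node_mset)
  also have "\<dots> \<le> 2 * PP (mset ts)" using SS_le_PP[of "mset ts"] by simp
  also have "\<dots> \<le> 2 * 2 ^ ZZ (mset ts)" using P by simp
  finally show ?case by (simp add: tsize_Node_mset)
qed

lemma minimal_lmin: "minimal T \<Longrightarrow> lmin T"
proof -
  assume "minimal T"
  then have eq: "I T = m (tsize T)" by (simp add: minimal_def)
  let ?S = "{I T' | T'. tsize T' = tsize T}"
  have fin: "finite ?S"
  proof (rule finite_subset)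
    show "?S \<subseteq> {..< 2 ^ tsize T}"
    proof
      fix x assume "x \<in> ?S"
      then obtain T' where "x = I T'" "tsize T' = tsize T" by auto
      with I_bound[of T'] show "x \<in> {..< 2 ^ tsize T}" by auto
    qed
  qed simp
  show "lmin T" unfolding lmin_def
  proof (intro allI impI)
    fix T' assume "tsize T' = tsize T"
    then have "I T' \<in> ?S" by auto
    then have "Min ?S \<le> I T'" using fin by simp
    then show "I T \<le> I T'" using eq by (simp add: m_def)
  qed
qed

lemma replace:
  assumes "lmin (Node ts)" "mset ts = A + R" "ZZ A' = ZZ A"
    and "SS A' + PP A' * PP R < SS A + PP A * PP R"
  shows False
proof -
  obtain xs where xs: "mset xs = A' + R" using ex_mset by blast
  have "tsize (Node xs) = tsize (Node ts)" using assms xs by (simp add: tsize_Node_mset)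
  then have "I (Node ts) \<le> I (Node xs)" using assms(1) by (simp add: lmin_def)
  moreover have "I (Node xs) < I (Node ts)" using assms xs
    by (simp add: I_Node_mset algebra_simps)
  ultimately show False by simp
qed

lemma lmin_child: assumes "lmin (Node ts)" "t \<in> set ts" shows "lmin t"
  unfolding lmin_def
proof (intro allI impI; rule ccontr)
  fix t' assume sz: "tsize t' = tsize t" and "\<not> I t \<le> I t'"
  then have lt: "I t' < I t" by simp
  have d1: "mset ts = {#t#} + (mset ts - {#t#})" using assms(2) by simp
  have z: "ZZ {#t'#} = ZZ {#t#}" using sz by simp
  have d2: "SS {#t'#} + PP {#t'#} * PP (mset ts - {#t#}) < SS {#t#} + PP {#t#} * PP (mset ts - {#t#})"
  proof -
    have "Suc (I t') * PP (mset ts - {#t#}) \<le> Suc (I t) * PP (mset ts - {#t#})"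
      using lt by (intro mult_le_mono1) simp
    show ?thesis using lt by (simp add: add_less_le_mono mult_le_mono1 less_imp_le)
  qed
  show False by (rule replace[OF assms(1) d1 z d2])
qed

lemma lmin_branch: "lmin T \<Longrightarrow> is_pos T p \<Longrightarrow> lmin (branch_at T p)"
proof (induction p arbitrary: T)
  case Nil then show ?case by simp
next
  case (Cons i q)
  obtain ts where T: "T = Node ts" by (cases T)
  have i: "i < length ts" "is_pos (ts!i) q" using Cons.prems T by auto
  have "lmin (ts!i)" using lmin_child Cons.prems(1) T i(1) by auto
  then show ?case using Cons.IH i T by simp
qed

lemma parent:
  "is_pos T (w @ [i]) \<Longrightarrow> is_pos T w \<and> (\<exists>ts. branch_at T w = Node ts \<and> i < length ts \<and> branch_at T (w@[i]) = ts ! i)"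
proof (induction w arbitrary: T)
  case Nil
  obtain ts where "T = Node ts" by (cases T)
  then show ?case using Nil by simp
next
  case (Cons j w)
  obtain ts where "T = Node ts" by (cases T)
  then show ?case using Cons by auto
qed



definition Ltab :: "nat list" where "Ltab = [0,1,3,6,11,20,36,61,101,166,283,481]"

function go :: "nat \<Rightarrow> nat \<Rightarrow> nat \<Rightarrow> nat \<Rightarrow> nat \<Rightarrow> nat \<Rightarrow> bool" where
  "go f k t rem s p = (if k = 0 then True else if f = 0 then False else
     (if (if t \<le> (s + Ltab!k) + p * Suc (Ltab!k) then True else if rem - k = 0 then False
          else go (f - 1) (min (rem - k) k) t (rem - k) (s + Ltab!k) (p * Suc (Ltab!k)))
      then go f (k - 1) t rem s p else False))"
  by pat_completeness auto
termination by (relation "measures [\<lambda>(f,k,_). f, \<lambda>(f,k,_). k]") auto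

declare go.simps[simp del]

lemma prod_list_ge1: "(1::nat) \<le> prod_list (map (\<lambda>x. Suc (g x)) xs)"
  by (induction xs) auto

lemma go_sound:
  "go f k t rem s p \<Longrightarrow> xs \<noteq> [] \<Longrightarrow> sorted_wrt (\<ge>) xs \<Longrightarrow> (\<forall>x\<in>set xs. 1 \<le> x) \<Longrightarrow> hd xs \<le> k
   \<Longrightarrow> sum_list xs = rem
   \<Longrightarrow> t \<le> s + sum_list (map (\<lambda>x. Ltab!x) xs) + p * prod_list (map (\<lambda>x. Suc (Ltab!x)) xs)"
proof (induction f k t rem s p arbitrary: xs rule: go.induct)
  case (1 f k t rem s p)
  obtain a xs' where xs: "xs = a # xs'" using "1.prems"(2) by (cases xs) auto
  have a1: "1 \<le> a" using "1.prems"(4) xs by auto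
  then have k0: "k \<noteq> 0" using "1.prems"(5) xs by auto
  have f0: "f \<noteq> 0" using "1.prems"(1) k0 by (subst (asm) go.simps) (auto split: if_splits)
  let ?C = "(if t \<le> (s + Ltab!k) + p * Suc (Ltab!k) then True else if rem - k = 0 then False
          else go (f - 1) (min (rem - k) k) t (rem - k) (s + Ltab!k) (p * Suc (Ltab!k)))"
  have C: ?C and G: "go f (k - 1) t rem s p" using "1.prems"(1) k0 f0
    by (subst (asm) go.simps; auto split: if_splits)+
  show ?case
  proof (cases "a = k")
    case False
    then have "hd xs \<le> k - 1" using "1.prems"(5) xs by auto
    then show ?thesis using "1.IH"(2)[OF k0 f0 C G "1.prems"(2) "1.prems"(3) "1.prems"(4) _ "1.prems"(6)] by blast
  next
    case True
    have eq: "s + sum_list (map (\<lambda>x. Ltab!x) xs) + p * prod_list (map (\<lambda>x. Suc (Ltab!x)) xs)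
      = (s + Ltab!k) + sum_list (map (\<lambda>x. Ltab!x) xs') + (p * Suc (Ltab!k)) * prod_list (map (\<lambda>x. Suc (Ltab!x)) xs')"
      using xs True by (simp only: list.map sum_list.Cons prod_list.Cons mult.assoc add.assoc)
    show ?thesis
    proof (cases "t \<le> (s + Ltab!k) + p * Suc (Ltab!k)")
      case True
      have "p * Suc (Ltab!k) \<le> (p * Suc (Ltab!k)) * prod_list (map (\<lambda>x. Suc (Ltab!x)) xs')"
        using prod_list_ge1[of "\<lambda>x. Ltab!x" xs'] by simp
      then show ?thesis unfolding eq using True by linarith
    next
      case nt: False
      have sxs: "sum_list xs' = rem - k" using "1.prems"(6) xs \<open>a = k\<close> by simp
      have r0: "rem - k \<noteq> 0" using C nt by auto
      then have ne: "xs' \<noteq> []" using sxs by auto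
      have G2: "go (f - 1) (min (rem - k) k) t (rem - k) (s + Ltab!k) (p * Suc (Ltab!k))"
        using C nt r0 by auto
      have srt: "sorted_wrt (\<ge>) xs'" using "1.prems"(3) xs by simp
      have hd1: "hd xs' \<le> k" using "1.prems"(3) xs ne \<open>a = k\<close> by (cases xs') auto
      have hd2: "hd xs' \<le> rem - k" using ne sxs by (cases xs') auto
      have "t \<le> (s + Ltab!k) + sum_list (map (\<lambda>x. Ltab!x) xs') + (p * Suc (Ltab!k)) * prod_list (map (\<lambda>x. Suc (Ltab!x)) xs')"
        using "1.IH"(1)[OF k0 f0 nt r0 G2 ne srt] "1.prems"(4) xs hd1 hd2 sxs by auto
      then show ?thesis unfolding eq .
    qed
  qed
qed

lemma go_all: assumes "2 \<le> n" "n \<le> 11" shows "go 12 (n - 1) (Ltab!n) (n - 1) 0 1"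
proof -
  have "n = 2 \<or> n = 3 \<or> n = 4 \<or> n = 5 \<or> n = 6 \<or> n = 7 \<or> n = 8 \<or> n = 9 \<or> n = 10 \<or> n = 11"
    using assms by presburger
  moreover have "go 12 1 (Ltab!2) 1 0 1" by (simp add: go.simps Ltab_def)
  moreover have "go 12 2 (Ltab!3) 2 0 1" by (simp add: go.simps Ltab_def)
  moreover have "go 12 3 (Ltab!4) 3 0 1" by (simp add: go.simps Ltab_def)
  moreover have "go 12 4 (Ltab!5) 4 0 1" by (simp add: go.simps Ltab_def)
  moreover have "go 12 5 (Ltab!6) 5 0 1" by (simp add: go.simps Ltab_def)
  moreover have "go 12 6 (Ltab!7) 6 0 1" by (simp add: go.simps Ltab_def)
  moreover have "go 12 7 (Ltab!8) 7 0 1" by (simp add: go.simps Ltab_def)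
  moreover have "go 12 8 (Ltab!9) 8 0 1" by (simp add: go.simps Ltab_def)
  moreover have "go 12 9 (Ltab!10) 9 0 1" by (simp add: go.simps Ltab_def)
  moreover have "go 12 10 (Ltab!11) 10 0 1" by (simp add: go.simps Ltab_def)
  ultimately show ?thesis by auto
qed

lemma sum_list_mset_eq: fixes f :: "'a \<Rightarrow> nat" assumes "mset xs = mset ys" shows "sum_list (map f xs) = sum_list (map f ys)"
proof -
  have "sum_list (map f xs) = sum_mset (mset (map f xs))" by (rule sum_mset_sum_list[symmetric])
  also have "\<dots> = sum_mset (mset (map f ys))" using assms by simp
  also have "\<dots> = sum_list (map f ys)" by (rule sum_mset_sum_list)
  finally show ?thesis .
qed

lemma prod_list_mset_eq: fixes f :: "'a \<Rightarrow> nat" assumes "mset xs = mset ys" shows "prod_list (map f xs) = prod_list (map f ys)"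
proof -
  have "prod_list (map f xs) = prod_mset (mset (map f xs))" by (rule prod_mset_prod_list[symmetric])
  also have "\<dots> = prod_mset (mset (map f ys))" using assms by simp
  also have "\<dots> = prod_list (map f ys)" by (rule prod_mset_prod_list)
  finally show ?thesis .
qed

lemma prod_list_mono_nat:
  "(\<And>x. x \<in> set xs \<Longrightarrow> f x \<le> (g x::nat)) \<Longrightarrow> prod_list (map f xs) \<le> prod_list (map g xs)"
  by (induction xs) (auto intro: mult_le_mono)

lemma sum_list_mono_nat:
  "(\<And>x. x \<in> set xs \<Longrightarrow> f x \<le> (g x::nat)) \<Longrightarrow> sum_list (map f xs) \<le> sum_list (map g xs)"
  by (induction xs) (auto intro: add_le_mono)

lemma lower: "tsize T \<le> 11 \<Longrightarrow> Ltab!(tsize T) \<le> I T"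
proof (induction T)
  case (Node ts)
  show ?case
  proof (cases ts)
    case Nil then show ?thesis by (simp add: Ltab_def)
  next
    case (Cons t0 ts0)
    define N where "N = sum_list (map tsize ts)"
    have n: "tsize (Node ts) = Suc N" by (simp add: N_def)
    have N1: "N \<ge> 1" using Cons tsize_pos[of t0] by (simp add: N_def)
    have N10: "N \<le> 10" using Node.prems n by simp
    define xs where "xs = rev (sort (map tsize ts))"
    have mx: "mset xs = mset (map tsize ts)" by (simp add: xs_def)
    have ne: "xs \<noteq> []" using Cons by (simp add: xs_def)
    have srt: "sorted_wrt (\<ge>) xs" by (simp add: xs_def sorted_wrt_rev)
    have pos: "\<forall>x\<in>set xs. 1 \<le> x" using tsize_pos by (auto simp: xs_def)
    have sxs: "sum_list xs = N" using sum_list_mset_eq[OF mx, of id] by (simp add: N_def)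
    have hd: "hd xs \<le> N" using ne sxs by (cases xs) auto
    have g: "go 12 N (Ltab!Suc N) N 0 1" using go_all[of "Suc N"] N1 N10 by auto
    have "Ltab!Suc N \<le> 0 + sum_list (map (\<lambda>x. Ltab!x) xs) + 1 * prod_list (map (\<lambda>x. Suc (Ltab!x)) xs)"
      by (rule go_sound[OF g ne srt pos hd sxs])
    also have "sum_list (map (\<lambda>x. Ltab!x) xs) = sum_list (map (\<lambda>t. Ltab!(tsize t)) ts)"
      using sum_list_mset_eq[OF mx, of "\<lambda>x. Ltab!x"] by (simp add: comp_def)
    also have "prod_list (map (\<lambda>x. Suc (Ltab!x)) xs) = prod_list (map (\<lambda>t. Suc (Ltab!(tsize t))) ts)"
      using prod_list_mset_eq[OF mx, of "\<lambda>x. Suc (Ltab!x)"] by (simp add: comp_def)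
    also have "0 + sum_list (map (\<lambda>t. Ltab!(tsize t)) ts) + 1 * prod_list (map (\<lambda>t. Suc (Ltab!(tsize t))) ts)
       \<le> sum_list (map I ts) + prod_list (map (\<lambda>t. Suc (I t)) ts)"
    proof -
      have le: "Ltab!(tsize t) \<le> I t" if "t \<in> set ts" for t
      proof -
        have "tsize t \<le> N" using that member_le_sum_list[of "tsize t" "map tsize ts"] by (simp add: N_def)
        then show ?thesis using Node.IH[OF that] N10 by simp
      qed
      have "sum_list (map (\<lambda>t. Ltab!(tsize t)) ts) \<le> sum_list (map I ts)"
        by (rule sum_list_mono_nat) (rule le)
      moreover have "prod_list (map (\<lambda>t. Suc (Ltab!(tsize t))) ts) \<le> prod_list (map (\<lambda>t. Suc (I t)) ts)"
        by (rule prod_list_mono_nat) (simp add: le)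
      ultimately show ?thesis by simp
    qed
    finally show ?thesis using n by (simp add: I_Node)
  qed
qed

lemma quad_list:
  assumes "\<forall>t\<in>set ts. tsize t * (tsize t + 1) \<le> 2 * I t"
  shows "sum_list (map tsize ts) * (sum_list (map tsize ts) + 1) + 2 \<le> 2 * prod_list (map (\<lambda>t. Suc (I t)) ts)
    \<and> sum_list (map tsize ts) \<le> sum_list (map I ts)"
  using assms
proof (induction ts)
  case Nil then show ?case by simp
next
  case (Cons t ts)
  define N where "N = sum_list (map tsize ts)"
  define P where "P = prod_list (map (\<lambda>t. Suc (I t)) ts)"
  define s where "s = tsize t"
  define x where "x = I t"
  have IH: "N * (N + 1) + 2 \<le> 2 * P" "N \<le> sum_list (map I ts)"
    using Cons by (auto simp: N_def P_def)
  have hx: "s * (s + 1) \<le> 2 * x" using Cons.prems by (simp add: s_def x_def)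
  have s1: "s \<ge> 1" using tsize_pos by (simp add: s_def)
  have sx: "s \<le> x"
  proof -
    have "2 * s \<le> s * (s + 1)" using s1 by (simp add: algebra_simps)
    then show ?thesis using hx by linarith
  qed
  have key: "4 * (s * N) \<le> (s * (s + 1)) * (N * (N + 1))"
  proof (cases "N = 0")
    case False
    then have "2 * 2 \<le> (s + 1) * (N + 1)" using s1 by (intro mult_le_mono) auto
    then have "(s * N) * 4 \<le> (s * N) * ((s + 1) * (N + 1))" by (intro mult_le_mono2) simp
    then show ?thesis by (simp add: algebra_simps)
  qed simp
  have "(s + N) * (s + N + 1) + 2 + (s + N) * (s + N + 1) + 2 \<le> (s * (s + 1) + 2) * (N * (N + 1) + 2)"
    using key by (simp add: algebra_simps)
  also have "\<dots> \<le> (2 * x + 2) * (2 * P)" using hx IH(1) by (intro mult_le_mono) auto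
  finally have "(s + N) * (s + N + 1) + 2 \<le> 2 * (Suc x * P)" by (simp add: algebra_simps)
  then show ?case using IH sx by (simp add: N_def P_def s_def x_def)
qed

lemma quad: "tsize T * (tsize T + 1) \<le> 2 * I T"
proof (induction T)
  case (Node ts)
  have h: "sum_list (map tsize ts) * (sum_list (map tsize ts) + 1) + 2 \<le> 2 * prod_list (map (\<lambda>t. Suc (I t)) ts)"
      "sum_list (map tsize ts) \<le> sum_list (map I ts)"
    using quad_list[of ts] Node by auto
  show ?case using h by (simp add: I_Node algebra_simps)
qed

lemma big_I: "tsize T \<ge> 6 \<Longrightarrow> I T \<ge> 21"
proof -
  assume "tsize T \<ge> 6"
  then have "6 * 7 \<le> tsize T * (tsize T + 1)" by (intro mult_le_mono) auto
  then show ?thesis using quad[of T] by linarith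
qed



definition st :: "nat \<Rightarrow> rtree" where "st k = Node (replicate k leaf)"

lemma SS_rep[simp]: "SS (replicate_mset k leaf) = k" by (induction k) auto
lemma PP_rep[simp]: "PP (replicate_mset k leaf) = 2 ^ k" by (induction k) auto
lemma ZZ_rep[simp]: "ZZ (replicate_mset k leaf) = k" by (induction k) auto

lemma I_st[simp]: "I (st k) = k + 2 ^ k"
  by (simp add: st_def I_Node_mset)
lemma tsize_st[simp]: "tsize (st k) = Suc k"
  by (simp add: st_def sum_list_replicate)

lemma lmin_le: "lmin T \<Longrightarrow> tsize W = tsize T \<Longrightarrow> I T \<le> I W"
  by (simp add: lmin_def)

lemma moveA:
  assumes lm: "lmin (Node ts)" and M: "mset ts = {#D1, D2#} + R" and D2: "D2 = Node L2"
    and lt: "PP (mset L2) < SS (mset L2) * PP R"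
  shows False
proof -
  define d1 where "d1 = I D1"
  define s2 where "s2 = SS (mset L2)"
  define p2 where "p2 = PP (mset L2)"
  define Q where "Q = PP R"
  define e where "e = I (Node (D1 # L2))"
  have e: "e = d1 + s2 + Suc d1 * p2" by (simp add: e_def I_Node_mset d1_def s2_def p2_def)
  have d2: "I D2 = s2 + p2" by (simp add: D2 I_Node_mset s2_def p2_def)
  have z: "ZZ {#Node (D1 # L2)#} = ZZ {#D1, D2#}" by (simp add: D2 tsize_Node_mset)
  have d1pos: "d1 \<ge> 1" using I_pos by (simp add: d1_def)
  have "d1 * p2 < d1 * (s2 * Q)" using lt d1pos by (simp add: s2_def p2_def Q_def)
  moreover have "e + Suc e * Q + d1 * (s2 * Q) = d1 + (s2 + p2) + Suc d1 * Suc (s2 + p2) * Q + d1 * p2"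
    unfolding e by (simp add: algebra_simps)
  ultimately have "e + Suc e * Q < d1 + (s2 + p2) + Suc d1 * Suc (s2 + p2) * Q" by linarith
  then have "SS {#Node (D1 # L2)#} + PP {#Node (D1 # L2)#} * PP R < SS {#D1, D2#} + PP {#D1, D2#} * PP R"
    by (simp add: e_def d1_def d2 Q_def mult.assoc)
  then show False using replace[OF lm M z] by blast
qed

lemma moveB:
  assumes lm: "lmin (Node ts)" and M: "mset ts = replicate_mset 5 leaf + R"
  shows False
proof -
  have z: "ZZ {#st 3, leaf#} = ZZ (replicate_mset 5 leaf)" by (simp add: numeral_eq_Suc)
  have "PP R \<ge> 1" by (rule PP_pos)
  then have "SS {#st 3, leaf#} + PP {#st 3, leaf#} * PP R < SS (replicate_mset 5 leaf) + PP (replicate_mset 5 leaf) * PP R"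
    by simp
  then show False using replace[OF lm M z] by blast
qed

lemma leaves_le4: "lmin (Node ts) \<Longrightarrow> count (mset ts) leaf \<le> 4"
proof (rule ccontr)
  assume lm: "lmin (Node ts)" and "\<not> count (mset ts) leaf \<le> 4"
  then have "replicate_mset 5 leaf \<subseteq># mset ts" by (simp flip: count_le_replicate_mset_subset_eq)
  then have "mset ts = replicate_mset 5 leaf + (mset ts - replicate_mset 5 leaf)" by simp
  then show False using moveB[OF lm] by blast
qed

lemma SS_ge: "t \<in># M \<Longrightarrow> I t \<le> SS M"
  by (metis SS_simps(2) insert_DiffM le_add1)

lemma PP_ge: "t \<in># M \<Longrightarrow> Suc (I t) \<le> PP M"
proof -
  assume "t \<in># M"
  then have "PP M = Suc (I t) * PP (M - {#t#})" by (metis PP_simps(2) insert_DiffM)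
  then show ?thesis using PP_pos[of "M - {#t#}"] mult_le_mono2[of 1 "PP (M - {#t#})" "Suc (I t)"] by simp
qed

lemma nonleaf2:
  assumes lm: "lmin (Node ts)" and two: "size (filter_mset (\<lambda>t. t \<noteq> leaf) (mset ts)) \<ge> 2"
  shows "length ts = 2"
proof (rule ccontr)
  assume nl: "length ts \<noteq> 2"
  define M where "M = mset ts"
  define NL where "NL = filter_mset (\<lambda>t. t \<noteq> leaf) M"
  have "size NL \<le> size M" unfolding NL_def by (rule size_filter_mset_lesseq)
  then have sM: "size M \<ge> 3" using two nl by (simp add: M_def NL_def)
  obtain t0 where "t0 \<in># NL" using two by (metis NL_def M_def multiset_nonemptyE not_numeral_le_zero size_empty)
  then obtain D2 where D2: "D2 \<in># NL" and D2min: "\<forall>r. r \<in># NL \<longrightarrow> I D2 \<le> I r"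
    using ex_has_least_nat[of "\<lambda>t. t \<in># NL" t0 I] by blast
  have "size (NL - {#D2#}) \<ge> 1" using two D2 by (simp add: NL_def M_def size_Diff_singleton)
  then obtain r where r: "r \<in># NL - {#D2#}" by (metis multiset_nonemptyE not_one_le_zero size_empty)
  have D2M: "D2 \<in># M" using D2 by (simp add: NL_def)
  have "count (NL - {#D2#}) r \<le> count (M - {#D2#}) r" by (simp add: NL_def)
  moreover have "count (NL - {#D2#}) r > 0" using r by (simp only: count_greater_zero_iff)
  ultimately have rM1: "r \<in># M - {#D2#}" by (metis count_greater_zero_iff order_less_le_trans)
  have rNL: "r \<in># NL" using r by (meson in_diffD)
  obtain M1 where M1: "M = add_mset D2 M1" using multi_member_split[OF D2M] by blast
  have e: "M - {#D2#} = M1" unfolding M1 by simp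
  have "r \<in># M1" using rM1 unfolding e .
  then obtain M2 where M2: "M1 = add_mset r M2" using multi_member_split[of r M1] by blast
  have "size M = Suc (Suc (size M2))" unfolding M1 M2 by simp
  then have "size M2 \<ge> 1" using sM by linarith
  then obtain D1 where D1: "D1 \<in># M2" by (metis multiset_nonemptyE not_one_le_zero size_empty)
  then obtain Mr where Mr: "M2 = add_mset D1 Mr" using multi_member_split[of D1 M2] by blast
  define R where "R = add_mset r Mr"
  have Meq: "mset ts = {#D1, D2#} + R" unfolding M_def[symmetric] M1 M2 Mr R_def by simp
  obtain L2 where L2: "D2 = Node L2" by (cases D2)
  have "D2 \<noteq> leaf" using D2 by (simp add: NL_def)
  then obtain l ls where L2c: "L2 = l # ls" using L2 by (cases L2) auto
  have s2: "SS (mset L2) \<ge> 1" using SS_ge[of l "mset L2"] I_pos[of l] L2c by simp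
  have p2: "PP (mset L2) \<le> I D2" by (simp add: L2 I_Node_mset)
  have "Suc (I r) \<le> PP R" using PP_ge[of r R] by (simp add: R_def)
  moreover have "I D2 \<le> I r" using D2min rNL by blast
  ultimately have "PP (mset L2) < PP R" using p2 by linarith
  also have "PP R \<le> SS (mset L2) * PP R" using s2 by simp
  finally show False using moveA[OF lm Meq L2] by blast
qed



lemma m1:
  assumes lm: "lmin (Node ts)" and M: "mset ts = {#B, C#}" and C: "C = Node LC"
    and D: "D \<in> set LC" and lt: "I B < I D"
  shows False
proof -
  obtain LC' where LC': "mset LC' = mset LC - {#D#}" using ex_mset by blast
  have MC: "mset LC = add_mset D (mset LC')" using D LC' by simp
  define b where "b = I B"
  define d where "d = I D"
  define s where "s = SS (mset LC')"
  define p where "p = PP (mset LC')"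
  define E where "E = Node (B # LC')"
  have c: "I C = d + s + Suc d * p" by (simp add: C I_Node_mset MC d_def s_def p_def)
  have e: "I E = b + s + Suc b * p" by (simp add: E_def I_Node_mset b_def s_def p_def)
  have z: "ZZ {#D, E#} = ZZ {#B, C#}" by (simp add: C E_def tsize_Node_mset MC)
  have M': "mset ts = {#B, C#} + {#}" using M by simp
  obtain x where x0: "d = Suc (b + x)" using less_imp_Suc_add[OF lt] unfolding b_def d_def by blast
  then have x: "d = b + Suc x" by simp
  have "Suc s \<le> p" using SS_le_PP by (simp add: s_def p_def)
  then obtain y0 where "p = Suc s + y0" using le_Suc_ex by blast
  then have y: "p = s + Suc y0" by simp
  have "(b + (d + s + Suc d * p) + Suc b * Suc (d + s + Suc d * p)) + d * s + b * p
      = (d + (b + s + Suc b * p) + Suc d * Suc (b + s + Suc b * p)) + d * p + b * s"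
    by (simp add: algebra_simps)
  moreover have "d * s + b * p < d * p + b * s" unfolding x y by (simp add: algebra_simps)
  ultimately have "d + (b + s + Suc b * p) + Suc d * Suc (b + s + Suc b * p)
      < b + (d + s + Suc d * p) + Suc b * Suc (d + s + Suc d * p)" by linarith
  then have "SS {#D, E#} + PP {#D, E#} * PP {#} < SS {#B, C#} + PP {#B, C#} * PP {#}"
    by (simp add: c e b_def d_def)
  then show False using replace[OF lm M' z] by blast
qed

lemma ZZ_le5: "\<forall>t\<in>#N. tsize t \<le> 5 \<Longrightarrow> ZZ N \<le> 5 * size N"
proof (induction N)
  case (add x N)
  then have "tsize x \<le> 5" "ZZ N \<le> 5 * size N" by auto
  then show ?case by simp
qed simp

definition "W6 = Node [st 3, leaf]"
definition "W7 = Node [st 3, leaf, leaf]"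
definition "W8 = Node [st 3, st 2]"
definition "W9 = Node [st 3, st 3]"
definition "W10 = Node [st 4, st 3]"
definition "W12 = Node [W7, st 3]"
definition "W13 = Node [W8, st 3]"
definition "W14 = Node [W9, st 3]"
definition "W17 = Node [W9, W7]"

lemma W_vals:
  "tsize W6 = 6" "I W6 = 36" "tsize W7 = 7" "I W7 = 61" "tsize W8 = 8" "I W8 = 101"
  "tsize W9 = 9" "I W9 = 166" "tsize W10 = 10" "I W10 = 283" "tsize W12 = 12" "I W12 = 816"
  "tsize W13 = 13" "I W13 = 1336" "tsize W14 = 14" "I W14 = 2181" "tsize W17 = 17" "I W17 = 10581"
  by (simp_all add: W6_def W7_def W8_def W9_def W10_def W12_def W13_def W14_def W17_def I_Node)



lemma filter_leaf: "filter_mset (\<lambda>t. \<not> t \<noteq> leaf) M = replicate_mset (count M leaf) leaf"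
proof -
  have "filter_mset (\<lambda>t. \<not> t \<noteq> leaf) M = filter_mset (\<lambda>t. t = leaf) M" by simp
  then show ?thesis by (simp add: filter_eq_replicate_mset)
qed

lemma j1:
  assumes lm: "lmin (Node ts)" and M: "mset ts = {#B, C#}" and b: "I B = 20" and sB: "tsize B = 5"
    and C: "C = Node LC" and ne: "LC \<noteq> []"
  shows "tsize (Node ts) \<in> {10, 11, 15, 16}"
proof -
  have "C \<in> set ts" using M by (metis add_mset_commute in_multiset_in_set union_single_eq_member)
  then have lC: "lmin (Node LC)" using lmin_child[OF lm] C by blast
  have le20: "I D \<le> 20" if "D \<in> set LC" for D
  proof (rule ccontr)
    assume "\<not> I D \<le> 20"
    then have "I B < I D" using b by simp
    then show False using m1[OF lm M C that] by blast
  qed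
  have le5: "tsize D \<le> 5" if "D \<in> set LC" for D
  proof (rule ccontr)
    assume "\<not> tsize D \<le> 5"
    then have "I D \<ge> 21" using big_I by simp
    then show False using le20[OF that] by simp
  qed
  define MC where "MC = mset LC"
  define NLC where "NLC = filter_mset (\<lambda>t. t \<noteq> leaf) MC"
  have part: "ZZ MC = ZZ NLC + count MC leaf"
  proof -
    have "MC = NLC + filter_mset (\<lambda>t. \<not> t \<noteq> leaf) MC" unfolding NLC_def by (rule multiset_partition)
    then have "ZZ MC = ZZ NLC + ZZ (filter_mset (\<lambda>t. \<not> t \<noteq> leaf) MC)" by (metis ZZ_simps(3))
    then show ?thesis by (simp add: filter_eq_replicate_mset)
  qed
  have cnt: "count MC leaf \<le> 4" using leaves_le4[OF lC] by (simp add: MC_def)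
  have szC: "tsize C \<le> 11"
  proof (cases "size NLC \<ge> 2")
    case True
    then have "length LC = 2" using nonleaf2[OF lC] by (simp add: NLC_def MC_def)
    then obtain x y where xy: "LC = [x, y]"
      by (metis (no_types, lifting) One_nat_def Suc_1 length_0_conv length_Suc_conv)
    have "tsize x \<le> 5" "tsize y \<le> 5" using le5 xy by auto
    then show ?thesis using xy C by simp
  next
    case False
    have "\<forall>t\<in>#NLC. tsize t \<le> 5" using le5 by (simp add: NLC_def MC_def)
    then have "ZZ NLC \<le> 5 * size NLC" by (rule ZZ_le5)
    then have "ZZ NLC \<le> 5" using False by linarith
    then show ?thesis using part cnt C by (simp add: tsize_Node_mset MC_def)
  qed
  define k where "k = tsize C"
  obtain l ls where lls: "LC = l # ls" using ne by (cases LC) auto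
  have k2: "k \<ge> 2" using tsize_pos[of l] by (simp add: k_def C lls)
  have k11: "k \<le> 11" using szC by (simp add: k_def)
  have cL: "Ltab!k \<le> I C" using lower[of C] szC by (simp add: k_def)
  have IT: "I (Node ts) = 20 + I C + 21 * Suc (I C)" by (simp add: I_Node_mset M b)
  have sT: "tsize (Node ts) = 6 + k" by (simp add: tsize_Node_mset M sB k_def)
  have bad: False if "tsize W = 6 + k" "I W < 20 + Ltab!k + 21 * Suc (Ltab!k)" for W
  proof -
    have "20 + Ltab!k + 21 * Suc (Ltab!k) \<le> I (Node ts)" unfolding IT using cL by simp
    moreover have "I (Node ts) \<le> I W" using lmin_le[OF lm] that(1) sT by simp
    ultimately show False using that(2) by simp
  qed
  have "k = 2 \<or> k = 3 \<or> k = 4 \<or> k = 5 \<or> k = 6 \<or> k = 7 \<or> k = 8 \<or> k = 9 \<or> k = 10 \<or> k = 11"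
    using k2 k11 by presburger
  moreover have "k \<noteq> 2" using bad[of W8] by (auto simp: W_vals Ltab_def)
  moreover have "k \<noteq> 3" using bad[of W9] by (auto simp: W_vals Ltab_def)
  moreover have "k \<noteq> 6" using bad[of W12] by (auto simp: W_vals Ltab_def)
  moreover have "k \<noteq> 7" using bad[of W13] by (auto simp: W_vals Ltab_def)
  moreover have "k \<noteq> 8" using bad[of W14] by (auto simp: W_vals Ltab_def)
  moreover have "k \<noteq> 11" using bad[of W17] by (auto simp: W_vals Ltab_def)
  ultimately show ?thesis using sT by auto
qed

lemma core:
  assumes lm: "lmin (Node ts)" and B: "B \<in> set ts" and sB: "tsize B = 5"
  shows "tsize (Node ts) \<in> {10, 11, 15, 16}"
proof -
  have lB: "lmin B" using lmin_child[OF lm B] .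
  have "tsize (st 4) = tsize B" using sB by simp
  then have "I B \<le> I (st 4)" by (rule lmin_le[OF lB])
  moreover have "Ltab!5 \<le> I B" using lower[of B] sB by simp
  ultimately have b: "I B = 20" by (simp add: Ltab_def)
  have Bnl: "B \<noteq> leaf" using sB by auto
  define M where "M = mset ts"
  define NL where "NL = filter_mset (\<lambda>t. t \<noteq> leaf) M"
  have BM: "B \<in># M" using B by (simp add: M_def)
  have BNL: "B \<in># NL" using BM Bnl by (simp add: NL_def)
  show ?thesis
  proof (cases "size NL \<ge> 2")
    case True
    then have len: "length ts = 2" using nonleaf2[OF lm] by (simp add: NL_def M_def)
    obtain M' where M': "M = add_mset B M'" using multi_member_split[OF BM] by blast
    have "size M' = 1" using len M' by (simp add: M_def) (metis size_mset size_add_mset numeral_2_eq_2 Suc_inject)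
    then obtain C where C: "M' = {#C#}" using size_1_singleton_mset by blast
    have Mt: "mset ts = {#B, C#}" using M' C by (simp add: M_def)
    have "C \<noteq> leaf"
    proof
      assume "C = leaf"
      then have "NL = {#B#}" using Bnl by (simp add: NL_def M_def Mt)
      then show False using True by simp
    qed
    then obtain LC where LC: "C = Node LC" "LC \<noteq> []" by (cases C) auto
    show ?thesis by (rule j1[OF lm Mt b sB LC])
  next
    case False
    obtain X where X: "NL = add_mset B X" using multi_member_split[OF BNL] by blast
    have "X = {#}" using False X by (cases X) auto
    then have NLB: "NL = {#B#}" using X by simp
    define k where "k = count M leaf"
    have k4: "k \<le> 4" using leaves_le4[OF lm] by (simp add: k_def M_def)
    have p: "M = NL + filter_mset (\<lambda>t. \<not> t \<noteq> leaf) M" unfolding NL_def by (rule multiset_partition)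
    have f: "filter_mset (\<lambda>t. \<not> t \<noteq> leaf) M = replicate_mset k leaf" unfolding k_def by (rule filter_leaf)
    have Mk: "M = add_mset B (replicate_mset k leaf)" using p unfolding f NLB by simp
    have IT: "I (Node ts) = 20 + k + 21 * 2 ^ k"
      by (simp add: I_Node_mset M_def[symmetric] Mk b)
    have sT: "tsize (Node ts) = 6 + k"
      by (simp add: tsize_Node_mset M_def[symmetric] Mk sB)
    have bad: False if "tsize W = 6 + k" "I W < 20 + k + 21 * 2 ^ k" for W
    proof -
      have "I (Node ts) \<le> I W" using lmin_le[OF lm] that(1) sT by simp
      then show False using that(2) IT by simp
    qed
    have "k = 0 \<or> k = 1 \<or> k = 2 \<or> k = 3 \<or> k = 4" using k4 by presburger
    moreover have "k \<noteq> 0" using bad[of W6] by (auto simp: W_vals)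
    moreover have "k \<noteq> 1" using bad[of W7] by (auto simp: W_vals)
    moreover have "k \<noteq> 2" using bad[of W8] by (auto simp: W_vals)
    moreover have "k \<noteq> 3" using bad[of W9] by (auto simp: W_vals)
    moreover have "k \<noteq> 4" using bad[of W10] by (auto simp: W_vals)
    ultimately show ?thesis by blast
  qed
qed

theorem lemma3p9:
  assumes "minimal T" and "tsize T \<ge> 6"
    and "v \<in> positions T" and "tsize (branch_at T v) = 5"
  shows "\<exists>w \<in> positions T. prefix w v \<and> tsize (branch_at T w) \<in> {10, 11, 15, 16}"
proof -
  have lT: "lmin T" using assms(1) by (rule minimal_lmin)
  have "v \<noteq> []" using assms(2,4) by auto
  then obtain w i where v: "v = w @ [i]" by (metis append_butlast_last_id)
  have pv: "is_pos T (w @ [i])" using assms(3) v by (simp add: positions_def)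
  then obtain ts where pw: "is_pos T w" and bw: "branch_at T w = Node ts" and il: "i < length ts"
    and bv: "branch_at T (w @ [i]) = ts ! i" using parent by blast
  have "lmin (Node ts)" using lmin_branch[OF lT pw] bw by simp
  moreover have "ts ! i \<in> set ts" using il by simp
  moreover have "tsize (ts ! i) = 5" using assms(4) v bv by simp
  ultimately have "tsize (Node ts) \<in> {10, 11, 15, 16}" by (rule core)
  then show ?thesis using pw bw v by (auto simp: positions_def)
qed


end
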